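(* Let $n\geq 3$ and let $F=\sigma_{n-1}$ be the $(n-1)$-th elementary symmetric function on $\mathbb{R}^n$. For every constant $B>0$ there exists a constant $K_0\geq 1$, depending only on $n$ and $B$, with the following property. Let $\lambda=(\lambda_1,\dots,\lambda_n)\in\Gamma_{n-1}$ satisfy $F(\lambda)\leq B$ and $$\lambda_1=\cdots=\lambda_m>\lambda_{m+1}\geq\cdots\geq\lambda_n$$ for some $1\le m\le n$. If $\lambda_n<-K_0$, then $$-\sum_{p\neq q}F^{pp,qq}\xi_p\xi_q+\frac{\left(\sum_i F^{ii}\xi_i\right)^2}{F}+2\sum_{i>m}\frac{F^{ii}\xi_i^2}{\lambda_1-\lambda_i}-\frac{F^{11}\xi_1^2}{\lambda_1}\geq 0$$ for every vector $\xi=(\xi_1,\dots,\xi_n)\in\mathbb{R}^n$ satisfying $\xi_i=0$ for all $1<i\leq m$. Here $F$, $F^{ii}$, $F^{pp,qq}$ are evaluated at $\lambda$.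
   Context: $\sigma_k(\lambda)$ denotes the $k$-th elementary symmetric function of $\lambda\in\mathbb{R}^n$ (with $\sigma_0=1$). Gårding's cone is $\Gamma_k=\{\lambda\in\mathbb{R}^n:\sigma_j(\lambda)>0,\ 1\le j\le k\}$. For $\lambda\in\mathbb{R}^n$, $(\lambda|i)$ denotes the vector in $\mathbb{R}^{n-1}$ obtained by deleting the $i$-th component, and $(\lambda|ij)$ the vector obtained by deleting the $i$-th and $j$-th components. Then $F^{ii}=\frac{\partial \sigma_{n-1}}{\partial\lambda_i}(\lambda)=\sigma_{n-2}(\lambda|i)$ and, for $p\neq q$, $F^{pp,qq}=\frac{\partial^2\sigma_{n-1}}{\partial\lambda_p\partial\lambda_q}(\lambda)=\sigma_{n-3}(\lambda|pq)$. The paper states the dependence of $K_0$ as "depending only on $n$ and $\max F$", i.e. on an upper bound for $F(\lambda)$. *)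

theory Defs
  imports "HOL-Analysis.Analysis"
begin

text \<open>Vectors in R^n are functions nat => real, with components indexed by a finite
index set (for R^n: the set {1..n}). sigma k I lam is the k-th elementary symmetric
function of the components lam i, i in I. Deleting components corresponds to removing
indices from I.\<close>

definition esym :: "nat \<Rightarrow> nat set \<Rightarrow> (nat \<Rightarrow> real) \<Rightarrow> real" where
  "esym k I lam = (\<Sum>S\<in>{S. S \<subseteq> I \<and> card S = k}. \<Prod>i\<in>S. lam i)"

definition garding :: "nat \<Rightarrow> nat \<Rightarrow> (nat \<Rightarrow> real) \<Rightarrow> bool" where
  "garding n k lam = (\<forall>j\<in>{1..k}. esym j {1..n} lam > 0)"

end

theory Submission
  imports Defs
begin

lemma scalar_det:
  fixes b l P g :: real
  assumes b: "b > 0" and l: "l > 0" and P: "P > 0" and sd: "g = 1/b - P" and g: "g > 0" and sl: "g*l \<le> 1"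
  shows "(2/P + 1/g) * ((-2/b + g + 2*(1 - g*b)/(l+b)) + 1/(b^2*g)) - (1/(b*g))^2 \<ge> 0"
proof -
  define x where "x = b*P"
  have x0: "x > 0" using b P by (simp add: x_def)
  have x1: "x < 1" using g sd b by (simp add: x_def field_simps)
  have sx: "g = (1-x)/b" using sd b by (simp add: x_def field_simps)
  have key: "(1-x)*(l+b) \<le> 2*(2-x)*b"
  proof -
    have "(1-x)*l \<le> b" using sl sx b by (simp add: field_simps)
    moreover have "x*b > 0" "x*b < b" using x0 x1 b by auto
    ultimately show ?thesis by (simp add: algebra_simps)
  qed
  have Px: "P = x/b" using b by (simp add: x_def)
  have "(2/P + 1/g) * ((-2/b + g + 2*(1 - g*b)/(l+b)) + 1/(b^2*g)) - (1/(b*g))^2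
      = (2*(2-x)*b - (1-x)*(l+b)) / ((1-x)*(l+b))" 
  proof -
    have nz: "x \<noteq> 0" "1 - x \<noteq> 0" "l + b \<noteq> 0" "b \<noteq> 0" using b l x0 x1 by auto
    have ha: "2/P + 1/g = b*(2-x)/(x*(1-x))" unfolding sx Px using nz by (simp add: field_simps; simp add: algebra_simps)
    have hg1: "1 - g*b = x" unfolding sx using nz by simp
    have hg: "(-2/b + g + 2*(1 - g*b)/(l+b)) + 1/(b^2*g) = x^2/(b*(1-x)) + 2*x/(l+b)"
    proof -
      have e1: "1/(b^2*g) = 1/(b*(1-x))" unfolding sx using nz by (simp add: power2_eq_square)
      have e2: "-2/b + g + 1/(b*(1-x)) = x^2/(b*(1-x))" unfolding sx using nz
        by (simp add: field_simps power2_eq_square; simp add: algebra_simps)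
      show ?thesis unfolding hg1 e1 using e2 by simp
    qed
    have hb: "(1/(b*g))^2 = 1/(1-x)^2" unfolding sx using nz by (simp add: field_simps; simp add: power2_eq_square algebra_simps)
    have f1: "b*(2-x)/(x*(1-x)) * (x^2/(b*(1-x))) = (2-x)*x/(1-x)^2"
      using nz by (simp add: times_divide_times_eq frac_eq_eq power2_eq_square; simp add: algebra_simps)
    have f2: "b*(2-x)/(x*(1-x)) * (2*x/(l+b)) = 2*b*(2-x)/((1-x)*(l+b))"
      using nz by (simp add: times_divide_times_eq frac_eq_eq; simp add: algebra_simps)
    have f3: "(2-x)*x/(1-x)^2 - 1/(1-x)^2 = -1"
    proof -
      have "(2-x)*x/(1-x)^2 - 1/(1-x)^2 = ((2-x)*x - 1)/(1-x)^2" by (simp add: diff_divide_distrib)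
      also have "(2-x)*x - 1 = -((1-x)^2)" by (simp add: power2_eq_square algebra_simps)
      finally show ?thesis using nz by simp
    qed
    have f4: "-1 + 2*b*(2-x)/((1-x)*(l+b)) = (2*(2-x)*b - (1-x)*(l+b)) / ((1-x)*(l+b))"
    proof -
      have D: "(1-x)*(l+b) \<noteq> 0" using nz by simp
      have "(2*(2-x)*b - (1-x)*(l+b)) / ((1-x)*(l+b)) = 2*b*(2-x)/((1-x)*(l+b)) - ((1-x)*(l+b))/((1-x)*(l+b))"
        by (simp only: diff_divide_distrib mult.commute mult.left_commute)
      thus ?thesis using D by simp
    qed
    have "b*(2-x)/(x*(1-x)) * (x^2/(b*(1-x)) + 2*x/(l+b)) - 1/(1-x)^2 = (2*(2-x)*b - (1-x)*(l+b)) / ((1-x)*(l+b))"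
    proof -
      have "b*(2-x)/(x*(1-x)) * (x^2/(b*(1-x)) + 2*x/(l+b)) = b*(2-x)/(x*(1-x)) * (x^2/(b*(1-x))) + b*(2-x)/(x*(1-x)) * (2*x/(l+b))"
        by (rule distrib_left)
      then show ?thesis unfolding f1 f2 f4[symmetric] using f3 by linarith
    qed
    thus ?thesis unfolding ha hg hb .
  qed
  also have "\<dots> \<ge> 0" using key x0 x1 b l by (intro divide_nonneg_pos) auto
  finally show ?thesis .
qed
lemma quad_nonneg:
  fixes al be ga V e :: real
  assumes "al > 0" "al * ga - be^2 \<ge> 0"
  shows "al * V^2 - 2*be*V*e + ga*e^2 \<ge> 0"
proof -
  have "al * (al * V^2 - 2*be*V*e + ga*e^2) = (al*V - be*e)^2 + (al*ga - be^2)*e^2"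
    by (simp add: power2_eq_square algebra_simps)
  also have "\<dots> \<ge> 0" using assms by simp
  finally show ?thesis using assms(1) by (simp add: zero_le_mult_iff)
qed

lemma scalar_final:
  fixes b l P g V e :: real
  assumes b: "b > 0" and l: "l > 0" and P: "P > 0" and sd: "g = 1/b - P" and g: "g > 0" and sl: "g*l \<le> 1"
  shows "2*V^2/P + (-2/b + g + 2*(1 - g*b)/(l+b))*e^2 + (V - e/b)^2/g \<ge> 0"
proof -
  define c where "c = -2/b + g + 2*(1 - g*b)/(l+b)"
  have "(V - e/b)^2/g = (1/g)*V^2 - 2*(1/(b*g))*V*e + (1/(b^2*g))*e^2"
    using b g by (simp add: power2_eq_square field_simps)
  hence eq: "2*V^2/P + c*e^2 + (V - e/b)^2/g = (2/P + 1/g)*V^2 - 2*(1/(b*g))*V*e + (c + 1/(b^2*g))*e^2"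
    by (simp add: algebra_simps)
  have "(2/P + 1/g)*V^2 - 2*(1/(b*g))*V*e + (c + 1/(b^2*g))*e^2 \<ge> 0"
    apply (rule quad_nonneg)
    using P g apply (simp add: add_pos_pos)
    using scalar_det[OF b l P sd g sl] unfolding c_def by simp
  thus ?thesis using eq unfolding c_def by simp
qed



lemma esym_prod_expand:
  assumes fin: "finite I"
  shows "(\<Prod>i\<in>I. t + lam i) = (\<Sum>j\<le>card I. esym j I lam * t^(card I - j))"
proof -
  have "(\<Prod>i\<in>I. t + lam i) = (\<Prod>i\<in>I. lam i + t)" by (simp add: add.commute)
  also have "\<dots> = (\<Sum>X\<in>Pow I. (\<Prod>x\<in>X. lam x) * (\<Prod>x\<in>I-X. t))"
    by (rule prod_add[OF fin])
  also have "\<dots> = (\<Sum>X\<in>Pow I. (\<Prod>x\<in>X. lam x) * t^(card I - card X))"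
  proof (rule sum.cong)
    fix X assume "X \<in> Pow I"
    hence "card (I - X) = card I - card X" using fin by (auto intro: card_Diff_subset finite_subset)
    thus "(\<Prod>x\<in>X. lam x) * (\<Prod>x\<in>I-X. t) = (\<Prod>x\<in>X. lam x) * t^(card I - card X)" by simp
  qed simp
  also have "\<dots> = (\<Sum>j\<le>card I. \<Sum>X\<in>{X. X \<in> Pow I \<and> card X = j}. (\<Prod>x\<in>X. lam x) * t^(card I - card X))"
    by (rule sum.group[symmetric]) (use fin in \<open>auto intro: card_mono\<close>)
  also have "\<dots> = (\<Sum>j\<le>card I. esym j I lam * t^(card I - j))"
  proof (rule sum.cong)
    fix j
    have "(\<Sum>X\<in>{X. X \<in> Pow I \<and> card X = j}. (\<Prod>x\<in>X. lam x) * t^(card I - card X))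
        = (\<Sum>X\<in>{S. S \<subseteq> I \<and> card S = j}. (\<Prod>x\<in>X. lam x) * t^(card I - j))"
      by (rule sum.cong) auto
    also have "\<dots> = esym j I lam * t^(card I - j)" unfolding esym_def by (simp add: sum_distrib_right)
    finally show "(\<Sum>X\<in>{X. X \<in> Pow I \<and> card X = j}. (\<Prod>x\<in>X. lam x) * t^(card I - card X)) = esym j I lam * t^(card I - j)" .
  qed simp
  finally show ?thesis .
qed

lemma esym_0: "finite I \<Longrightarrow> esym 0 I lam = 1"
proof -
  assume "finite I"
  hence "{S. S \<subseteq> I \<and> card S = 0} = {{}}" by (auto dest: finite_subset)
  thus ?thesis unfolding esym_def by simp
qed

lemma poly_mono:
  assumes fin: "finite I" and N: "card I \<ge> 1"
    and pos: "\<And>j. 1 \<le> j \<Longrightarrow> j \<le> card I - 1 \<Longrightarrow> esym j I lam > 0"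
    and c: "0 \<le> c" and ct: "c \<le> t"
  shows "(\<Prod>i\<in>I. t + lam i) - (\<Prod>i\<in>I. c + lam i) \<ge> esym (card I - 1) I lam * (t - c)"
proof -
  let ?N = "card I"
  let ?f = "\<lambda>j. esym j I lam * (t^(?N - j) - c^(?N - j))"
  have "(\<Prod>i\<in>I. t + lam i) - (\<Prod>i\<in>I. c + lam i) = (\<Sum>j\<le>?N. ?f j)"
    unfolding esym_prod_expand[OF fin] by (simp add: sum_subtractf right_diff_distrib)
  moreover have "?f (?N - 1) \<le> (\<Sum>j\<le>?N. ?f j)"
  proof (rule member_le_sum)
    fix j assume j: "j \<in> {..?N} - {?N - 1}"
    have e: "esym j I lam \<ge> 0 \<or> ?N - j = 0"
    proof (cases "j = 0")
      case True thus ?thesis using esym_0[OF fin] by simp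
    next
      case False
      show ?thesis proof (cases "j = ?N")
        case True thus ?thesis by simp
      next
        case False
        thus ?thesis using \<open>j \<noteq> 0\<close> j pos[of j] by force
      qed
    qed
    have "c^(?N - j) \<le> t^(?N - j)" using c ct by (intro power_mono) auto
    thus "0 \<le> ?f j" using e by auto
  qed (use N in auto)
  moreover have "?f (?N - 1) = esym (?N - 1) I lam * (t - c)" using N by simp
  ultimately show ?thesis by linarith
qed

lemma two_nonpos_false:
  assumes fin: "finite I" and N: "card I \<ge> 2" and a: "a \<in> I" and b: "b \<in> I" and ab: "a \<noteq> b"
    and pos: "\<And>j. 1 \<le> j \<Longrightarrow> j \<le> card I - 1 \<Longrightarrow> esym j I lam > 0"
    and la: "lam a \<le> 0" and lb: "lam b < 0" and lab: "lam b \<le> lam a"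
  shows False
proof -
  define Q where "Q t = (\<Prod>i\<in>I. t + lam i)" for t
  define H where "H t = (\<Prod>i\<in>I-{a,b}. t + lam i)" for t
  have QH: "Q t = (t + lam a) * (t + lam b) * H t" for t
  proof -
    have "Q t = (t + lam a) * (\<Prod>i\<in>I-{a}. t + lam i)" unfolding Q_def using fin a by (rule prod.remove)
    also have "(\<Prod>i\<in>I-{a}. t + lam i) = (t + lam b) * (\<Prod>i\<in>I-{a}-{b}. t + lam i)"
      using fin b ab by (intro prod.remove) auto
    also have "I-{a}-{b} = I - {a,b}" by auto
    finally show ?thesis unfolding H_def by (simp add: mult.assoc)
  qed
  define s where "s = esym (card I - 1) I lam"
  have s0: "s > 0" unfolding s_def using N by (intro pos) auto
  have mono: "Q t - Q c \<ge> s * (t - c)" if "0 \<le> c" "c \<le> t" for c t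
    unfolding Q_def s_def using poly_mono[OF fin _ pos that] N by simp
  define c where "c = - lam b"
  define d where "d = - lam a"
  have Qc: "Q c = 0" unfolding QH c_def by simp
  have Qd: "Q d = 0" unfolding QH d_def by simp
  show False
  proof (cases "d < c")
    case True
    have "Q c - Q d \<ge> s * (c - d)" using mono[of d c] True la by (simp add: d_def)
    moreover have "s * (c - d) > 0" using s0 True by simp
    ultimately show False using Qc Qd by simp
  next
    case False
    hence dc: "d = c" using lab by (simp add: c_def d_def)
    define M where "M = (\<Prod>i\<in>I-{a,b}. c + 1 + \<bar>lam i\<bar>)"
    have M1: "M \<ge> 1" unfolding M_def using c_def lb by (intro prod_ge_1) auto
    define \<delta> where "\<delta> = min 1 (s / (2*M))"
    have d0: "\<delta> > 0" unfolding \<delta>_def using s0 M1 by simp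
    have d1: "\<delta> \<le> 1" unfolding \<delta>_def by simp
    have dM: "\<delta> * M \<le> s/2"
    proof -
      have "\<delta> \<le> s/(2*M)" unfolding \<delta>_def by simp
      hence "\<delta> * M \<le> s/(2*M) * M" using M1 by (intro mult_right_mono) auto
      thus ?thesis using M1 by simp
    qed
    let ?t = "c + \<delta>"
    have c0: "c > 0" using lb c_def by simp
    have Ht: "H ?t \<le> M"
    proof -
      have "H ?t \<le> \<bar>H ?t\<bar>" by simp
      also have "\<dots> = (\<Prod>i\<in>I-{a,b}. \<bar>?t + lam i\<bar>)" unfolding H_def by (simp add: abs_prod)
      also have "\<dots> \<le> M" unfolding M_def
        using c0 d0 d1 by (intro prod_mono) (auto simp: abs_le_iff)
      finally show ?thesis .
    qed
    have Qt: "Q ?t = \<delta>^2 * H ?t" unfolding QH using dc by (simp add: c_def d_def power2_eq_square)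
    have "s * \<delta> \<le> Q ?t" using mono[of c ?t] Qc c0 d0 by simp
    also have "\<dots> \<le> \<delta>^2 * M" unfolding Qt using Ht d0 by (intro mult_left_mono) auto
    finally have "s * \<delta> \<le> \<delta> * (\<delta> * M)" by (simp add: power2_eq_square)
    hence "s \<le> \<delta> * M" using d0 by simp
    thus False using dM s0 by simp
  qed
qed



lemma esym_last:
  assumes fin: "finite J" and ne: "J \<noteq> {}"
  shows "esym (card J - 1) J lam = (\<Sum>j\<in>J. \<Prod>i\<in>J-{j}. lam i)"
proof -
  have eq: "{S. S \<subseteq> J \<and> card S = card J - 1} = (\<lambda>j. J - {j}) ` J"
  proof
    show "(\<lambda>j. J - {j}) ` J \<subseteq> {S. S \<subseteq> J \<and> card S = card J - 1}" using fin by auto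
  next
    show "{S. S \<subseteq> J \<and> card S = card J - 1} \<subseteq> (\<lambda>j. J - {j}) ` J"
    proof
      fix S assume S: "S \<in> {S. S \<subseteq> J \<and> card S = card J - 1}"
      hence SJ: "S \<subseteq> J" and cS: "card S = card J - 1" by auto
      have "card J > 0" using fin ne by (simp add: card_gt_0_iff)
      have "card (J - S) = 1" using card_Diff_subset[OF finite_subset[OF SJ fin] SJ] cS \<open>card J > 0\<close> by simp
      then obtain j where j: "J - S = {j}" by (auto simp: card_Suc_eq)
      hence "j \<in> J" "S = J - {j}" using SJ by auto
      thus "S \<in> (\<lambda>j. J - {j}) ` J" by auto
    qed
  qed
  have inj: "inj_on (\<lambda>j. J - {j}) J" by (auto simp: inj_on_def)
  show ?thesis unfolding esym_def eq by (simp add: sum.reindex[OF inj])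
qed

lemma esym_last_nz:
  assumes fin: "finite J" and ne: "J \<noteq> {}" and nz: "\<And>i. i \<in> J \<Longrightarrow> lam i \<noteq> 0"
  shows "esym (card J - 1) J lam = (\<Prod>i\<in>J. lam i) * (\<Sum>j\<in>J. 1 / lam j)"
proof -
  have "(\<Prod>i\<in>J-{j}. lam i) = (\<Prod>i\<in>J. lam i) * (1 / lam j)" if "j \<in> J" for j
  proof -
    have "(\<Prod>i\<in>J. lam i) = lam j * (\<Prod>i\<in>J-{j}. lam i)" using fin that by (rule prod.remove)
    thus ?thesis using nz[OF that] by simp
  qed
  thus ?thesis unfolding esym_last[OF fin ne] by (simp add: sum_distrib_left)
qed



lemma hess_identity:
  fixes I :: "nat set" and u xi :: "nat \<Rightarrow> real" and S sg :: real
  assumes fin: "finite I" and sg0: "sg \<noteq> 0" and S0: "S \<noteq> 0"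
  shows "- (\<Sum>p\<in>I. \<Sum>q\<in>I-{p}. S*u p*u q*(sg - u p - u q) * xi p * xi q)
     + (\<Sum>i\<in>I. S*u i*(sg - u i) * xi i)^2 / (S* sg)
     = S*((\<Sum>p\<in>I. (sg - 2*u p)*(u p*xi p)^2) + (\<Sum>p\<in>I. u p*(u p*xi p))^2/sg)"
proof -
  define \<eta> where "\<eta> p = u p * xi p" for p
  define E where "E = (\<Sum>p\<in>I. \<eta> p)"
  define W where "W = (\<Sum>p\<in>I. u p * \<eta> p)"
  define Y where "Y = (\<Sum>p\<in>I. (sg - 2*u p)*(\<eta> p)^2)"
  have inner: "(\<Sum>q\<in>I-{p}. S*u p*u q*(sg - u p - u q) * xi p * xi q)
      = S*\<eta> p*((sg - u p)*E - W) - S*(sg - 2*u p)*(\<eta> p)^2" if p: "p \<in> I" for p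
  proof -
    have "(\<Sum>q\<in>I-{p}. S*u p*u q*(sg - u p - u q) * xi p * xi q)
        = (\<Sum>q\<in>I-{p}. S*\<eta> p*((sg - u p)*\<eta> q - u q*\<eta> q))"
      by (rule sum.cong) (simp_all add: \<eta>_def algebra_simps)
    also have "\<dots> = (\<Sum>q\<in>I. S*\<eta> p*((sg - u p)*\<eta> q - u q*\<eta> q)) - S*\<eta> p*((sg - u p)*\<eta> p - u p*\<eta> p)"
      using fin p by (simp add: sum_diff1)
    also have "(\<Sum>q\<in>I. S*\<eta> p*((sg - u p)*\<eta> q - u q*\<eta> q)) = S*\<eta> p*((sg - u p)*E - W)"
      unfolding E_def W_def by (simp add: sum_distrib_left[symmetric] sum_subtractf)
    finally show ?thesis by (simp add: power2_eq_square algebra_simps)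
  qed
  have dbl: "(\<Sum>p\<in>I. \<Sum>q\<in>I-{p}. S*u p*u q*(sg - u p - u q) * xi p * xi q) = S*(sg*E^2 - 2*E*W) - S*Y"
  proof -
    have "(\<Sum>p\<in>I. \<Sum>q\<in>I-{p}. S*u p*u q*(sg - u p - u q) * xi p * xi q)
       = (\<Sum>p\<in>I. S*\<eta> p*((sg - u p)*E - W) - S*(sg - 2*u p)*(\<eta> p)^2)"
      using inner by (rule sum.cong[OF refl])
    also have "\<dots> = (\<Sum>p\<in>I. S*\<eta> p*((sg - u p)*E - W)) - (\<Sum>p\<in>I. S*((sg - 2*u p)*(\<eta> p)^2))"
      by (simp add: sum_subtractf mult.assoc)
    also have "(\<Sum>p\<in>I. S*((sg - 2*u p)*(\<eta> p)^2)) = S*Y" unfolding Y_def by (simp add: sum_distrib_left)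
    also have "(\<Sum>p\<in>I. S*\<eta> p*((sg - u p)*E - W)) = (\<Sum>p\<in>I. S*((sg*E - W)*\<eta> p - E*(u p*\<eta> p)))"
      by (rule sum.cong) (simp_all add: algebra_simps)
    also have "(\<Sum>p\<in>I. S*((sg*E - W)*\<eta> p - E*(u p*\<eta> p))) = S*((sg*E - W)*E - E*W)"
      unfolding E_def W_def by (simp add: sum_subtractf sum_distrib_left[symmetric])
    finally show ?thesis by (simp add: power2_eq_square algebra_simps)
  qed
  have lin: "(\<Sum>i\<in>I. S*u i*(sg - u i) * xi i) = S*(sg*E - W)"
  proof -
    have "(\<Sum>i\<in>I. S*u i*(sg - u i) * xi i) = (\<Sum>i\<in>I. S*(sg*\<eta> i - u i*\<eta> i))"
      by (rule sum.cong) (simp_all add: \<eta>_def algebra_simps)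
    thus ?thesis unfolding E_def W_def by (simp add: sum_subtractf sum_distrib_left[symmetric])
  qed
  have sq: "(S*(sg*E - W))^2/(S* sg) = S*(sg*E^2 - 2*E*W) + S*W^2/sg"
    using sg0 S0 by (simp add: field_simps power2_eq_square; simp add: algebra_simps)
  show ?thesis unfolding dbl lin sq
    by (simp add: Y_def W_def \<eta>_def algebra_simps)
qed

lemma split_sum:
  fixes h :: "nat \<Rightarrow> real"
  assumes m1: "1 \<le> m" and mn: "m < n" and z: "\<And>p. 1 < p \<Longrightarrow> p \<le> m \<Longrightarrow> h p = 0"
  shows "(\<Sum>p\<in>{1..n}. h p) = h 1 + (\<Sum>p\<in>{m<..<n}. h p) + h n"
proof -
  have e: "{1..n} = insert 1 ({1<..m} \<union> insert n {m<..<n})" using m1 mn by auto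
  have "(\<Sum>p\<in>{1..n}. h p) = h 1 + (\<Sum>p\<in>{1<..m} \<union> insert n {m<..<n}. h p)"
    unfolding e using m1 mn by (subst sum.insert) auto
  also have "(\<Sum>p\<in>{1<..m} \<union> insert n {m<..<n}. h p) = (\<Sum>p\<in>{1<..m}. h p) + (\<Sum>p\<in>insert n {m<..<n}. h p)"
    using mn by (intro sum.union_disjoint) auto
  also have "(\<Sum>p\<in>{1<..m}. h p) = 0" using z by (intro sum.neutral) auto
  also have "(\<Sum>p\<in>insert n {m<..<n}. h p) = h n + (\<Sum>p\<in>{m<..<n}. h p)" by simp
  finally show ?thesis by simp
qed

theorem lemma3p1:
  fixes n :: nat and B :: real
  assumes "n \<ge> 3" and "B > 0"
  shows "\<exists>K0::real. K0 \<ge> 1 \<and>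
    (\<forall>(lam :: nat \<Rightarrow> real) (m :: nat).
      garding n (n - 1) lam \<longrightarrow>
      esym (n - 1) {1..n} lam \<le> B \<longrightarrow>
      1 \<le> m \<longrightarrow> m \<le> n \<longrightarrow>
      (\<forall>i\<in>{1..m}. lam i = lam 1) \<longrightarrow>
      (m < n \<longrightarrow> lam m > lam (m + 1)) \<longrightarrow>
      (\<forall>i j. m + 1 \<le> i \<longrightarrow> i \<le> j \<longrightarrow> j \<le> n \<longrightarrow> lam j \<le> lam i) \<longrightarrow>
      lam n < - K0 \<longrightarrow>
      (\<forall>xi :: nat \<Rightarrow> real. (\<forall>i. 1 < i \<and> i \<le> m \<longrightarrow> xi i = 0) \<longrightarrow>
        - (\<Sum>p\<in>{1..n}. \<Sum>q\<in>{1..n}-{p}. esym (n - 3) ({1..n} - {p, q}) lam * xi p * xi q)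
        + (\<Sum>i\<in>{1..n}. esym (n - 2) ({1..n} - {i}) lam * xi i)\<^sup>2 / esym (n - 1) {1..n} lam
        + 2 * (\<Sum>i\<in>{m<..n}. esym (n - 2) ({1..n} - {i}) lam * (xi i)\<^sup>2 / (lam 1 - lam i))
        - esym (n - 2) ({1..n} - {1}) lam * (xi 1)\<^sup>2 / lam 1
        \<ge> 0))"
proof (rule exI[of _ "max 1 B"], intro conjI allI impI)
  show "max 1 B \<ge> 1" by simp
next
  fix lam :: "nat \<Rightarrow> real" and m :: nat and xi :: "nat \<Rightarrow> real"
  assume G: "garding n (n - 1) lam" and FB: "esym (n - 1) {1..n} lam \<le> B"
    and m1: "1 \<le> m" and mn: "m \<le> n" and eq1: "\<forall>i\<in>{1..m}. lam i = lam 1"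
    and gap: "m < n \<longrightarrow> lam m > lam (m + 1)"
    and ord: "\<forall>i j. m + 1 \<le> i \<longrightarrow> i \<le> j \<longrightarrow> j \<le> n \<longrightarrow> lam j \<le> lam i"
    and lnK: "lam n < - max 1 B"
    and xi0: "\<forall>i. 1 < i \<and> i \<le> m \<longrightarrow> xi i = 0"
  have n3: "n \<ge> 3" using assms(1) .
  define b where "b = - lam n"
  define l where "l = lam 1"
  have b1: "b > 1" and bB: "b > B" using lnK by (auto simp: b_def)
  have cardI: "card {1..n} = n" by simp
  have ej: "lam j = l" if "1 \<le> j" "j \<le> m" for j
    unfolding l_def by (rule eq1[rule_format]) (use that in simp)
  have em: "lam m = l" using ej[of m] m1 by simp
  have pos: "\<And>j. 1 \<le> j \<Longrightarrow> j \<le> card {1..n} - 1 \<Longrightarrow> esym j {1..n} lam > 0"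
    using G unfolding garding_def by auto
  have ln_min: "lam n \<le> lam j" if j: "j \<in> {1..n}" for j
  proof (cases "j \<le> m")
    case True
    hence lj: "lam j = lam m" using ej[of j] em j by simp
    show ?thesis
    proof (cases "m < n")
      case True
      have "lam n \<le> lam (m+1)" using ord[rule_format, of "m+1" n] True by simp
      thus ?thesis using gap True lj by auto
    next
      case False
      hence "m = n" using mn by simp
      thus ?thesis using lj by simp
    qed
  next
    case False
    thus ?thesis using ord[rule_format, of j n] j by simp
  qed
  have l_max: "lam j \<le> l" if j: "j \<in> {1..n}" for j
  proof (cases "j \<le> m")
    case True
    thus ?thesis using ej[of j] j by simp
  next
    case False
    hence mlt: "m < n" using j by auto
    have "lam j \<le> lam (m+1)" using ord[rule_format, of "m+1" j] False j by simp
    also have "\<dots> < lam m" using gap mlt by auto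
    also have "lam m = l" by (rule em)
    finally show ?thesis by simp
  qed
  have snd: "lam (n-1) \<le> lam j" if j: "j \<in> {1..n}-{n}" for j
  proof (cases "j \<le> m")
    case True
    hence "lam j = l" using ej[of j] j by simp
    thus ?thesis using l_max[of "n-1"] n3 by auto
  next
    case False
    moreover have "j \<le> n-1" using j by auto
    ultimately show ?thesis using ord[rule_format, of j "n-1"] by simp
  qed
  have hn1: "lam (n-1) > 0"
  proof (rule ccontr)
    assume "\<not> lam (n-1) > 0"
    hence "lam (n-1) \<le> 0" by simp
    moreover have "lam n < 0" using b1 by (simp add: b_def)
    moreover have "lam n \<le> lam (n-1)" using ln_min n3 by auto
    ultimately show False
      using two_nonpos_false[of "{1..n}" "n-1" n lam, OF _ _ _ _ _ pos] n3 by fastforce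
  qed
  have lpos: "lam j > 0" if "j \<in> {1..n}-{n}" for j using snd[OF that] hn1 by simp
  have lnneg: "lam n < 0" using b1 by (simp add: b_def)
  have nz: "lam j \<noteq> 0" if "j \<in> {1..n}" for j using lpos[of j] lnneg that by (cases "j = n") auto
  have l0: "l > 0" using lpos[of 1] n3 by (simp add: l_def)
  have mlt: "m < n"
  proof (rule ccontr)
    assume "\<not> m < n"
    hence "m = n" using mn by simp
    hence "lam n = l" using em by simp
    thus False using l0 lnneg by simp
  qed
  define u where "u j = 1 / lam j" for j
  define S where "S = (\<Prod>i\<in>{1..n}. lam i)"
  define sg where "sg = (\<Sum>j\<in>{1..n}. u j)"
  have F: "esym (n-1) {1..n} lam = S * sg"
    using esym_last_nz[of "{1..n}" lam] nz n3 by (simp add: S_def sg_def u_def)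
  have Fii: "esym (n-2) ({1..n}-{i}) lam = S * u i * (sg - u i)" if i: "i \<in> {1..n}" for i
  proof -
    have c: "card ({1..n}-{i}) - 1 = n - 2" using i by simp
    have "(if i = 1 then 2 else 1) \<in> {1..n}-{i}" using n3 i by auto
    hence ne: "{1..n}-{i} \<noteq> {}" by blast
    have "esym (n-2) ({1..n}-{i}) lam = (\<Prod>j\<in>{1..n}-{i}. lam j) * (\<Sum>j\<in>{1..n}-{i}. u j)"
      using esym_last_nz[of "{1..n}-{i}" lam] nz ne unfolding c by (simp add: u_def)
    moreover have "S = lam i * (\<Prod>j\<in>{1..n}-{i}. lam j)" unfolding S_def using i by (intro prod.remove) auto
    moreover have "sg = u i + (\<Sum>j\<in>{1..n}-{i}. u j)" unfolding sg_def using i by (intro sum.remove) auto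
    ultimately show ?thesis using nz[OF i] by (simp add: u_def)
  qed
  have Fpq: "esym (n-3) ({1..n}-{p,q}) lam = S * u p * u q * (sg - u p - u q)"
    if p: "p \<in> {1..n}" and q: "q \<in> {1..n}-{p}" for p q
  proof -
    have e: "{1..n}-{p,q} = {1..n}-{p}-{q}" by auto
    have c: "card ({1..n}-{p,q}) - 1 = n - 3" unfolding e using p q by simp
    have ne: "{1..n}-{p,q} \<noteq> {}"
    proof
      assume "{1..n}-{p,q} = {}"
      hence "{1..n} \<subseteq> {p,q}" by auto
      hence "card {1..n} \<le> card {p,q}" by (intro card_mono) auto
      also have "\<dots> \<le> 2" by (simp add: card_insert_if)
      finally show False using n3 by simp
    qed
    have "esym (n-3) ({1..n}-{p,q}) lam = (\<Prod>j\<in>{1..n}-{p,q}. lam j) * (\<Sum>j\<in>{1..n}-{p,q}. u j)"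
      using esym_last_nz[of "{1..n}-{p,q}" lam] nz ne unfolding c by (simp add: u_def)
    moreover have "S = lam p * (\<Prod>j\<in>{1..n}-{p}. lam j)" unfolding S_def using p by (intro prod.remove) auto
    moreover have "(\<Prod>j\<in>{1..n}-{p}. lam j) = lam q * (\<Prod>j\<in>{1..n}-{p,q}. lam j)" unfolding e using q by (intro prod.remove) auto
    moreover have "sg = u p + (\<Sum>j\<in>{1..n}-{p}. u j)" unfolding sg_def using p by (intro sum.remove) auto
    moreover have "(\<Sum>j\<in>{1..n}-{p}. u j) = u q + (\<Sum>j\<in>{1..n}-{p,q}. u j)" unfolding e using q by (intro sum.remove) auto
    ultimately show ?thesis using nz[OF p] nz[of q] q by (simp add: u_def)
  qed
  have Sn: "S = lam n * (\<Prod>j\<in>{1..n}-{n}. lam j)" unfolding S_def using n3 by (intro prod.remove) auto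
  have Pr0: "(\<Prod>j\<in>{1..n}-{n}. lam j) > 0" using lpos by (intro prod_pos) auto
  have Sneg: "S < 0" unfolding Sn using Pr0 lnneg by (simp add: mult_neg_pos)
  have Fpos: "esym (n-1) {1..n} lam > 0" using pos[of "n-1"] n3 by simp
  have sgneg: "sg < 0" using Fpos Sneg unfolding F by (simp add: zero_less_mult_iff)
  define \<sigma> where "\<sigma> = - sg"
  define A where "A = - S"
  define P where "P = (\<Sum>j\<in>{1..n}-{n}. u j)"
  have un: "u n = - 1 / b" by (simp add: u_def b_def)
  have sgP: "sg = u n + P" unfolding sg_def P_def using n3 by (intro sum.remove) auto
  have \<sigma>P: "\<sigma> = 1/b - P" unfolding \<sigma>_def sgP un by simp
  have \<sigma>0: "\<sigma> > 0" using sgneg by (simp add: \<sigma>_def)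
  have A0: "A > 0" using Sneg by (simp add: A_def)
  have upos: "u j > 0" if "j \<in> {1..n}-{n}" for j using lpos[OF that] by (simp add: u_def)
  have "1 \<in> {1..n}-{n}" using n3 by auto
  hence P0: "P > 0" unfolding P_def using upos by (intro sum_pos) auto
  have lb: "lam j > b" if j: "j \<in> {1..n}-{n}" for j
  proof -
    have "u j \<le> P" unfolding P_def using j upos by (intro member_le_sum) (auto intro: less_imp_le)
    also have "P < 1/b" using \<sigma>P \<sigma>0 by simp
    finally have "1 / lam j < 1 / b" by (simp add: u_def)
    thus ?thesis using lpos[OF j] b1 by (simp add: field_simps)
  qed
  have \<sigma>l: "\<sigma> * l \<le> 1"
  proof -
    have e1: "(\<Prod>j\<in>{1..n}-{n}. lam j) = l * (\<Prod>j\<in>{1..n}-{n}-{1}. lam j)"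
      unfolding l_def using n3 by (intro prod.remove) auto
    have g1: "(\<Prod>j\<in>{1..n}-{n}-{1}. lam j) \<ge> 1" proof (rule prod_ge_1)
      fix x assume "x \<in> {1..n}-{n}-{1}"
      hence "lam x > b" using lb by auto
      thus "1 \<le> lam x" using b1 by simp
    qed
    have "A = b * l * (\<Prod>j\<in>{1..n}-{n}-{1}. lam j)" unfolding A_def Sn e1 by (simp add: b_def)
    moreover have "b * l * 1 \<le> b * l * (\<Prod>j\<in>{1..n}-{n}-{1}. lam j)"
      using g1 b1 l0 by (intro mult_left_mono) auto
    ultimately have "A \<ge> b * l" by simp
    hence "b * l * \<sigma> \<le> A * \<sigma>" using \<sigma>0 by (intro mult_right_mono) auto
    also have "A * \<sigma> = esym (n-1) {1..n} lam" unfolding F A_def \<sigma>_def by simp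
    also have "\<dots> \<le> B" by (rule FB)
    also have "B < b" by (rule bB)
    finally have "b * (l * \<sigma>) < b * 1" by (simp add: mult.assoc)
    hence "l * \<sigma> < 1" using b1 by (simp add: mult_less_cancel_left_pos)
    thus ?thesis by (simp add: mult.commute)
  qed
  define \<eta> where "\<eta> p = u p * xi p" for p
  define Y where "Y = (\<Sum>p\<in>{1..n}. (2 * u p + \<sigma>) * (\<eta> p)^2)"
  define W where "W = (\<Sum>p\<in>{1..n}. u p * \<eta> p)"
  define T3 where "T3 = (\<Sum>i\<in>{m<..n}. (1 + \<sigma> * lam i) * (\<eta> i)^2 / (l - lam i))"
  define GG where "GG = Y + W^2/\<sigma> + 2 * T3 - (u 1 + \<sigma>) * (\<eta> 1)^2"
  have I1: "1 \<in> {1..n}" using n3 by simp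
  have pt: "S * u i * (sg - u i) * (xi i)^2 = A * (1 + \<sigma> * lam i) * (\<eta> i)^2" if i: "i \<in> {1..n}" for i
    using nz[OF i] unfolding \<eta>_def u_def A_def \<sigma>_def by (simp add: field_simps power2_eq_square)
  have e12: "- (\<Sum>p\<in>{1..n}. \<Sum>q\<in>{1..n}-{p}. esym (n - 3) ({1..n} - {p, q}) lam * xi p * xi q)
        + (\<Sum>i\<in>{1..n}. esym (n - 2) ({1..n} - {i}) lam * xi i)\<^sup>2 / esym (n - 1) {1..n} lam
        = A * (Y + W^2/\<sigma>)"
  proof -
    have t1: "(\<Sum>p\<in>{1..n}. \<Sum>q\<in>{1..n}-{p}. esym (n - 3) ({1..n} - {p, q}) lam * xi p * xi q)
       = (\<Sum>p\<in>{1..n}. \<Sum>q\<in>{1..n}-{p}. S*u p*u q*(sg - u p - u q) * xi p * xi q)"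
    proof (intro sum.cong refl)
      fix p q assume p: "p \<in> {1..n}" and q: "q \<in> {1..n}-{p}"
      show "esym (n - 3) ({1..n} - {p, q}) lam * xi p * xi q = S*u p*u q*(sg - u p - u q) * xi p * xi q"
        by (simp only: Fpq[OF p q])
    qed
    have t2: "(\<Sum>i\<in>{1..n}. esym (n - 2) ({1..n} - {i}) lam * xi i) = (\<Sum>i\<in>{1..n}. S*u i*(sg - u i) * xi i)"
    proof (intro sum.cong refl)
      fix i assume i: "i \<in> {1..n}"
      show "esym (n - 2) ({1..n} - {i}) lam * xi i = S*u i*(sg - u i) * xi i" by (simp only: Fii[OF i])
    qed
    have h: "- (\<Sum>p\<in>{1..n}. \<Sum>q\<in>{1..n}-{p}. S*u p*u q*(sg - u p - u q) * xi p * xi q)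
     + (\<Sum>i\<in>{1..n}. S*u i*(sg - u i) * xi i)^2 / (S * sg)
     = S*((\<Sum>p\<in>{1..n}. (sg - 2*u p)*(u p*xi p)^2) + (\<Sum>p\<in>{1..n}. u p*(u p*xi p))^2/sg)"
      using sgneg Sneg by (intro hess_identity) auto
    have y: "(\<Sum>p\<in>{1..n}. (sg - 2*u p)*(u p*xi p)^2) = - Y"
      unfolding Y_def \<eta>_def \<sigma>_def by (simp add: sum_negf[symmetric] algebra_simps)
    have w: "(\<Sum>p\<in>{1..n}. u p*(u p*xi p)) = W" unfolding W_def \<eta>_def by simp
    show ?thesis unfolding t1 t2 F h y w using \<sigma>0 by (simp add: A_def \<sigma>_def algebra_simps)
  qed
  have e3: "(\<Sum>i\<in>{m<..n}. esym (n - 2) ({1..n} - {i}) lam * (xi i)\<^sup>2 / (lam 1 - lam i)) = A * T3"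
  proof -
    have "(\<Sum>i\<in>{m<..n}. esym (n - 2) ({1..n} - {i}) lam * (xi i)\<^sup>2 / (lam 1 - lam i))
        = (\<Sum>i\<in>{m<..n}. A * ((1 + \<sigma> * lam i) * (\<eta> i)^2 / (l - lam i)))"
    proof (rule sum.cong[OF refl])
      fix i assume "i \<in> {m<..n}"
      hence i: "i \<in> {1..n}" using m1 by auto
      show "esym (n - 2) ({1..n} - {i}) lam * (xi i)\<^sup>2 / (lam 1 - lam i) = A * ((1 + \<sigma> * lam i) * (\<eta> i)^2 / (l - lam i))"
        unfolding Fii[OF i] pt[OF i] l_def by simp
    qed
    thus ?thesis unfolding T3_def by (simp add: sum_distrib_left)
  qed
  have e4: "esym (n - 2) ({1..n} - {1}) lam * (xi 1)\<^sup>2 / lam 1 = A * ((u 1 + \<sigma>) * (\<eta> 1)^2)"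
  proof -
    have "esym (n - 2) ({1..n} - {1}) lam * (xi 1)\<^sup>2 / lam 1 = A * (1 + \<sigma> * lam 1) * (\<eta> 1)^2 / lam 1"
      unfolding Fii[OF I1] pt[OF I1] by simp
    also have "\<dots> = A * ((u 1 + \<sigma>) * (\<eta> 1)^2)" using nz[OF I1] unfolding u_def by (simp add: field_simps)
    finally show ?thesis .
  qed
  have GG0: "GG \<ge> 0"
  proof -
    define R where "R = {m<..<n}"
    have \<eta>0: "\<eta> p = 0" if "1 < p" "p \<le> m" for p using xi0 that by (simp add: \<eta>_def)
    have Rsub: "p \<in> {1..n}-{n}" if "p \<in> R" for p using that m1 by (auto simp: R_def)
    have Rl: "l - lam p > 0" if p: "p \<in> R" for p
    proof -
      have "lam p \<le> lam (m+1)" using ord[rule_format, of "m+1" p] p by (auto simp: R_def)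
      also have "\<dots> < lam m" using gap mlt by auto
      finally show ?thesis using em by simp
    qed
    define c where "c p = 2 * u p + \<sigma> + 2 * (1 + \<sigma> * lam p) / (l - lam p)" for p
    have cbig: "c p \<ge> 2 * u p + 2 / (l - lam p)" if p: "p \<in> R" for p
    proof -
      have "2 \<le> 2 * (1 + \<sigma> * lam p)" using \<sigma>0 lpos[OF Rsub[OF p]] by simp
      hence "2 / (l - lam p) \<le> 2 * (1 + \<sigma> * lam p) / (l - lam p)" using Rl[OF p] by (intro divide_right_mono) auto
      thus ?thesis unfolding c_def using \<sigma>0 by linarith
    qed
    have cpos: "c p > 0" if p: "p \<in> R" for p
    proof -
      have "2 * u p + 2 / (l - lam p) > 0" using upos[OF Rsub[OF p]] Rl[OF p] by (intro add_pos_pos) auto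
      thus ?thesis using cbig[OF p] by simp
    qed
    have cR: "(u p)^2 / c p \<le> (u p - u 1) / 2" if p: "p \<in> R" for p
    proof -
      have lp: "lam p > 0" using lpos[OF Rsub[OF p]] .
      have pos2: "2 * u p + 2 / (l - lam p) > 0" using upos[OF Rsub[OF p]] Rl[OF p] by (intro add_pos_pos) auto
      have "(u p)^2 / c p \<le> (u p)^2 / (2 * u p + 2 / (l - lam p))"
        using cbig[OF p] pos2 by (intro divide_left_mono) auto
      also have "\<dots> = (u p - u 1) / 2"
      proof -
        have nz1: "l - lam p \<noteq> 0" "lam p \<noteq> 0" "l \<noteq> 0" using Rl[OF p] lp l0 by auto
        have up: "u p = 1 / lam p" by (simp add: u_def)
        have u1': "u 1 = 1 / l" by (simp add: u_def l_def)
        have q1: "2 * (1 / lam p) + 2 / (l - lam p) = 2 * l / (lam p * (l - lam p))"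
          using nz1 by (simp add: field_simps)
        have q2: "(1 / lam p)^2 / (2 * l / (lam p * (l - lam p))) = (1 / lam p - 1 / l) / 2"
          using nz1 by (simp add: field_simps power2_eq_square)
        show ?thesis unfolding up u1' q1 q2 ..
      qed
      finally show ?thesis .
    qed
    define Z where "Z = u 1 * (\<eta> 1)^2 + (\<Sum>p\<in>R. c p * (\<eta> p)^2)"
    define V where "V = u 1 * \<eta> 1 + (\<Sum>p\<in>R. u p * \<eta> p)"
    define Lp where "Lp = u 1 + (\<Sum>p\<in>R. (u p)^2 / c p)"
    have u1: "u 1 = 1 / l" by (simp add: u_def l_def)
    have u1p: "u 1 > 0" using l0 u1 by simp
    have uj: "u j = u 1" if "1 \<le> j" "j \<le> m" for j using ej[OF that] u1 by (simp add: u_def)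
    have LpP: "Lp \<le> P / 2"
    proof -
      have "(\<Sum>p\<in>R. (u p)^2 / c p) \<le> (\<Sum>p\<in>R. (u p - u 1) / 2)" using cR by (intro sum_mono) auto
      also have "\<dots> = ((\<Sum>p\<in>R. u p) - real (card R) * u 1) / 2"
        by (simp add: sum_divide_distrib[symmetric] sum_subtractf)
      finally have a: "Lp \<le> u 1 + ((\<Sum>p\<in>R. u p) - real (card R) * u 1) / 2" unfolding Lp_def by simp
      have "{1..n}-{n} = {1..m} \<union> R" using mlt by (auto simp: R_def)
      hence "P = (\<Sum>p\<in>{1..m} \<union> R. u p)" unfolding P_def by simp
      also have "\<dots> = (\<Sum>p\<in>{1..m}. u p) + (\<Sum>p\<in>R. u p)"
        by (rule sum.union_disjoint) (auto simp: R_def)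
      also have "(\<Sum>p\<in>{1..m}. u p) = (\<Sum>p\<in>{1..m}. u 1)"
        by (rule sum.cong[OF refl]) (rule uj, auto)
      also have "(\<Sum>p\<in>{1..m}. u 1) = real m * u 1" by simp
      finally have b: "P = real m * u 1 + (\<Sum>p\<in>R. u p)" .
      have cr: "real (card R) = real n - real m - 1" using mlt by (simp add: R_def of_nat_diff)
      have cr2: "real (card R) * u 1 = real n * u 1 - real m * u 1 - u 1" unfolding cr by (simp add: algebra_simps)
      have "real n \<ge> 3" using n3 by simp
      hence n3u: "3 * u 1 \<le> real n * u 1" using u1p by (intro mult_right_mono) auto
      have aux: "\<And>Lp z a k P x y :: real. Lp \<le> z + (a - k)/2 \<Longrightarrow> P = x + a \<Longrightarrow> k = y - x - z \<Longrightarrow> 3*z \<le> y \<Longrightarrow> Lp \<le> P/2"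
        by (simp add: field_simps)
      show ?thesis by (rule aux[OF a b cr2 n3u])
    qed
    have ZV: "Z \<ge> 2 * V^2 / P"
    proof -
      define \<tau> where "\<tau> = 2 * V / P"
      have sq: "c p * (\<eta> p - \<tau> * u p / c p)^2 = c p * (\<eta> p)^2 - 2 * \<tau> * (u p * \<eta> p) + \<tau>^2 * ((u p)^2 / c p)"
        if p: "p \<in> R" for p using cpos[OF p] by (simp add: power2_eq_square field_simps)
      have "0 \<le> u 1 * (\<eta> 1 - \<tau>)^2 + (\<Sum>p\<in>R. c p * (\<eta> p - \<tau> * u p / c p)^2)"
        using u1p cpos by (intro add_nonneg_nonneg sum_nonneg mult_nonneg_nonneg) (auto intro: less_imp_le)
      also have "(\<Sum>p\<in>R. c p * (\<eta> p - \<tau> * u p / c p)^2)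
          = (\<Sum>p\<in>R. c p * (\<eta> p)^2) - 2 * \<tau> * (\<Sum>p\<in>R. u p * \<eta> p) + \<tau>^2 * (\<Sum>p\<in>R. (u p)^2 / c p)"
        using sq by (simp add: sum.distrib sum_subtractf sum_distrib_left)
      finally have "0 \<le> Z - 2 * \<tau> * V + \<tau>^2 * Lp"
        unfolding Z_def V_def Lp_def by (simp add: power2_eq_square algebra_simps)
      moreover have "\<tau>^2 * Lp \<le> \<tau>^2 * (P/2)" using LpP by (intro mult_left_mono) auto
      ultimately have "Z \<ge> 2 * \<tau> * V - \<tau>^2 * (P/2)" by simp
      also have "2 * \<tau> * V - \<tau>^2 * (P/2) = 2 * V^2 / P" unfolding \<tau>_def using P0 by (simp add: power2_eq_square field_simps)
      finally show ?thesis .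
    qed
    have Ysplit: "Y = (2 * u 1 + \<sigma>) * (\<eta> 1)^2 + (\<Sum>p\<in>R. (2 * u p + \<sigma>) * (\<eta> p)^2) + (2 * u n + \<sigma>) * (\<eta> n)^2"
      unfolding Y_def R_def by (rule split_sum[OF m1 mlt]) (simp add: \<eta>0)
    have Wsplit: "W = u 1 * \<eta> 1 + (\<Sum>p\<in>R. u p * \<eta> p) + u n * \<eta> n"
      unfolding W_def R_def by (rule split_sum[OF m1 mlt]) (simp add: \<eta>0)
    have T3split: "T3 = (\<Sum>p\<in>R. (1 + \<sigma> * lam p) * (\<eta> p)^2 / (l - lam p)) + (1 + \<sigma> * lam n) * (\<eta> n)^2 / (l - lam n)"
    proof -
      have "{m<..n} = insert n R" using mlt by (auto simp: R_def)
      thus ?thesis unfolding T3_def by (simp add: R_def)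
    qed
    have csum: "(\<Sum>p\<in>R. c p * (\<eta> p)^2) = (\<Sum>p\<in>R. (2 * u p + \<sigma>) * (\<eta> p)^2) + 2 * (\<Sum>p\<in>R. (1 + \<sigma> * lam p) * (\<eta> p)^2 / (l - lam p))"
      unfolding c_def by (simp add: sum.distrib sum_distrib_left algebra_simps)
    define cn where "cn = -2/b + \<sigma> + 2*(1 - \<sigma>*b)/(l+b)"
    have cneq: "(2 * u n + \<sigma>) + 2 * (1 + \<sigma> * lam n) / (l - lam n) = cn"
      unfolding cn_def un by (simp add: b_def)
    have GGeq: "GG = Z + cn * (\<eta> n)^2 + (V - \<eta> n / b)^2 / \<sigma>"
    proof -
      have w: "W = V - \<eta> n / b" unfolding Wsplit V_def un by simp
      have y: "Y + 2 * T3 - (u 1 + \<sigma>) * (\<eta> 1)^2 = Z + cn * (\<eta> n)^2"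
        unfolding Ysplit T3split Z_def csum cneq[symmetric] by (simp add: algebra_simps)
      have "GG = (Y + 2 * T3 - (u 1 + \<sigma>) * (\<eta> 1)^2) + W^2/\<sigma>" unfolding GG_def by simp
      thus ?thesis unfolding y w .
    qed
    have "2 * V^2 / P + cn * (\<eta> n)^2 + (V - \<eta> n / b)^2 / \<sigma> \<ge> 0"
      unfolding cn_def using b1 l0 P0 \<sigma>P \<sigma>0 \<sigma>l by (intro scalar_final) auto
    thus ?thesis unfolding GGeq using ZV by simp
  qed
  have "- (\<Sum>p\<in>{1..n}. \<Sum>q\<in>{1..n}-{p}. esym (n - 3) ({1..n} - {p, q}) lam * xi p * xi q)
        + (\<Sum>i\<in>{1..n}. esym (n - 2) ({1..n} - {i}) lam * xi i)\<^sup>2 / esym (n - 1) {1..n} lam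
        + 2 * (\<Sum>i\<in>{m<..n}. esym (n - 2) ({1..n} - {i}) lam * (xi i)\<^sup>2 / (lam 1 - lam i))
        - esym (n - 2) ({1..n} - {1}) lam * (xi 1)\<^sup>2 / lam 1 = A * GG"
    unfolding e12 e3 e4 GG_def by (simp add: algebra_simps)
  thus "- (\<Sum>p\<in>{1..n}. \<Sum>q\<in>{1..n}-{p}. esym (n - 3) ({1..n} - {p, q}) lam * xi p * xi q)
        + (\<Sum>i\<in>{1..n}. esym (n - 2) ({1..n} - {i}) lam * xi i)\<^sup>2 / esym (n - 1) {1..n} lam
        + 2 * (\<Sum>i\<in>{m<..n}. esym (n - 2) ({1..n} - {i}) lam * (xi i)\<^sup>2 / (lam 1 - lam i))
        - esym (n - 2) ({1..n} - {1}) lam * (xi 1)\<^sup>2 / lam 1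
        \<ge> 0" using GG0 A0 by simp
qed

end
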